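(* Let $$\Omega=\{(\chi,\zeta,\xi):\ 0.454<\chi\le 0.45537,\ 0\le\zeta\le \tfrac12-\chi,\ 0\le\xi\le 1-2\chi-2\zeta\},$$ let $$f(\chi,\zeta)=\frac{3^{\frac12-4\chi+2\zeta}(1-2\chi-2\zeta)^{1-2\chi-2\zeta}(1-2\chi+4\zeta)^{1-2\chi+4\zeta}(6\chi-\frac32+3\zeta)^{6\chi-\frac32+3\zeta}(6\chi-\frac32-9\zeta)^{6\chi-\frac32-9\zeta}}{(2\chi+\zeta-\frac12)^{2\chi+\zeta-\frac12}\,2^{1-2\chi+\zeta}\,(\frac12-\chi-\zeta)^{\frac12-\chi-\zeta}\,(\frac12-\chi+2\zeta)^{\frac12-\chi+2\zeta}\,(2\chi-3\zeta-\frac12)^{2\chi-3\zeta-\frac12}},$$ $$g(\chi,\zeta,\xi)=\frac{2^{2\xi}\,(1/1.618)^{\xi}}{\xi^{\xi}\,(1-2\chi-2\zeta-\xi)^{1-2\chi-2\zeta-\xi}\,(1-2\chi+4\zeta-\xi)^{1-2\chi+4\zeta-\xi}\,(-\frac72+10\chi-5\zeta+\xi)^{-\frac72+10\chi-5\zeta+\xi}},$$ and $h=f\cdot g$ (with the convention $0^0=1$). Then, uniformly over positive even integers $n$ and integers $x$ with $0.454n<x\le 0.45537n$, $$\frac{q(x,n)}{(3n-1)!!}=O(n^6)\cdot\sup\{h(\chi,\zeta,\xi)^n:(\chi,\zeta,\xi)\in\Omega\},$$ where $q(x,n)$ is the quantity below.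
   Context: $q(x,n):=\sum_{i=0}^{\frac n2-x}\binom{n}{\frac n2-i}\frac{(\frac n2-i)!\,3^{n-2x-2i}}{(2x+i-\frac n2)!\,2^{\frac n2-x-i}(\frac n2-x-i)!}\cdot\frac{(\frac n2+i)!\,3^{n-2x+4i}}{(2x-3i-\frac n2)!\,2^{\frac n2-x+2i}(\frac n2-x+2i)!}\cdot\sum_{j=0}^{n-2i-2x}\binom{n-2i-2x}{j}\binom{n-2x+4i}{j}2^{2j}j!\left(\frac1{1.618}\right)^j\frac{(3(2x-\frac n2-3i))!\,(3(2x-\frac n2+i))!}{(3(2x-\frac n2-3i)-2(n-2i-2x)+j)!}$. Here $(3n-1)!!=(3n-1)(3n-3)\cdots 1$. *)

theory Defs
  imports "HOL-Analysis.Analysis"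
begin

fun dfact :: "nat \<Rightarrow> nat" where
  "dfact 0 = 1"
| "dfact (Suc 0) = 1"
| "dfact (Suc (Suc k)) = Suc (Suc k) * dfact k"

definition xlx :: "real \<Rightarrow> real" where
  "xlx t = (if t = 0 then 1 else t powr t)"

(* q(x,n); here m = n/2 (n even).  All factorial arguments are nonnegative
   in the range 0.454 n < x <= 0.45537 n, so natural-number subtraction
   agrees with integer subtraction there. *)
definition q :: "nat \<Rightarrow> nat \<Rightarrow> real" where
  "q x n = (let m = n div 2 in
     \<Sum>i = 0..m - x.
       real (n choose (m - i)) * fact (m - i) * 3 ^ (n - 2*x - 2*i)
         / (fact (2*x + i - m) * 2 ^ (m - x - i) * fact (m - x - i))
       * (fact (m + i) * 3 ^ (n - 2*x + 4*i)
         / (fact (2*x - 3*i - m) * 2 ^ (m - x + 2*i) * fact (m - x + 2*i)))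
       * (\<Sum>j = 0..n - 2*i - 2*x.
           real ((n - 2*i - 2*x) choose j) * real ((n - 2*x + 4*i) choose j)
           * 2 ^ (2*j) * fact j * (1 / 1.618) ^ j
           * fact (3 * (2*x - m - 3*i)) * fact (3 * (2*x - m + i))
           / fact (3 * (2*x - m - 3*i) - 2 * (n - 2*i - 2*x) + j)))"

definition Omega :: "(real \<times> real \<times> real) set" where
  "Omega = {(c, z, w). 0.454 < c \<and> c \<le> 0.45537 \<and> 0 \<le> z \<and> z \<le> 1/2 - c
                       \<and> 0 \<le> w \<and> w \<le> 1 - 2*c - 2*z}"

definition f_fun :: "real \<Rightarrow> real \<Rightarrow> real" where
  "f_fun c z =
     3 powr (1/2 - 4*c + 2*z) * xlx (1 - 2*c - 2*z) * xlx (1 - 2*c + 4*z)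
       * xlx (6*c - 3/2 + 3*z) * xlx (6*c - 3/2 - 9*z)
     / (xlx (2*c + z - 1/2) * 2 powr (1 - 2*c + z) * xlx (1/2 - c - z)
        * xlx (1/2 - c + 2*z) * xlx (2*c - 3*z - 1/2))"

definition g_fun :: "real \<Rightarrow> real \<Rightarrow> real \<Rightarrow> real" where
  "g_fun c z w =
     2 powr (2*w) * (1 / 1.618) powr w
     / (xlx w * xlx (1 - 2*c - 2*z - w) * xlx (1 - 2*c + 4*z - w)
        * xlx (-7/2 + 10*c - 5*z + w))"

definition h_fun :: "real \<times> real \<times> real \<Rightarrow> real" where
  "h_fun p = (case p of (c, z, w) \<Rightarrow> f_fun c z * g_fun c z w)"

end

theory Submission
  imports Defs
begin

lemma xlx_pos: "xlx t > 0"
  by (simp add: xlx_def)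

definition Lx :: "real \<Rightarrow> real" where "Lx t = ln (xlx t)"

lemma xlx_exp: "xlx t = exp (Lx t)"
  by (simp add: Lx_def xlx_pos)

lemma Lx_pos: "t > 0 \<Longrightarrow> Lx t = t * ln t"
  by (simp add: Lx_def xlx_def ln_powr)

lemma Lx_0[simp]: "Lx 0 = 0"
  by (simp add: Lx_def xlx_def)

lemma Lx_scale: assumes "N > 0" "t \<ge> 0" shows "Lx (N * t) = N * t * ln N + N * Lx t"
proof (cases "t = 0")
  case True then show ?thesis by simp
next
  case False
  then have "t > 0" using assms by simp
  then show ?thesis using assms by (simp add: Lx_pos ln_mult algebra_simps)
qed

lemma xlx_nat: "xlx (real k) = real k ^ k"
  by (cases "k = 0") (auto simp: xlx_def powr_realpow)

lemma fact_lower: "real k ^ k / exp (real k) \<le> fact k"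
proof -
  have s: "(\<lambda>n. real k ^ n / fact n) sums exp (real k)"
    using exp_converges[of "real k"] by (simp add: divide_inverse_commute)
  have "sum (\<lambda>n. real k ^ n / fact n) {k} \<le> suminf (\<lambda>n. real k ^ n / fact n)"
    by (rule sum_le_suminf) (use s in \<open>auto simp: sums_iff\<close>)
  then have "real k ^ k / fact k \<le> exp (real k)" using s by (simp add: sums_iff)
  then show ?thesis by (simp add: divide_le_eq mult.commute)
qed

lemma ln_lower: fixes t :: real assumes "t \<ge> 0" shows "2 * t / (2 + t) \<le> ln (1 + t)"
proof -
  let ?f = "\<lambda>s::real. ln (1 + s) - 2 * s / (2 + s)"
  have "?f 0 \<le> ?f t"
  proof (rule DERIV_nonneg_imp_nondecreasing[OF assms])
    fix s :: real assume s: "0 \<le> s" "s \<le> t"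
    have "DERIV ?f s :> 1 / (1 + s) - (2 * (2 + s) - 2 * s) / (2 + s)^2"
      using s by (auto intro!: derivative_eq_intros simp: power2_eq_square field_simps)
    moreover have "1 / (1 + s) - (2 * (2 + s) - 2 * s) / (2 + s)^2 \<ge> 0"
    proof -
      have "4 * (1+s) \<le> (2+s)^2" by (simp add: power2_eq_square algebra_simps)
      then have "4 / (2+s)^2 \<le> 1 / (1+s)" using s by (simp add: field_simps)
      then show ?thesis by simp
    qed
    ultimately show "\<exists>y. DERIV ?f s :> y \<and> y \<ge> 0" by blast
  qed
  then show ?thesis by simp
qed

lemma e_le_ratio: assumes "r \<ge> 1" "real k = r" shows "exp 1 * sqrt r * r ^ k \<le> sqrt (r+1) * (r+1) ^ k"
proof -
  have r0: "r > 0" using assms by simp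
  have p: "1 + 1/r > 0" using r0 by (simp add: add_pos_pos)
  have "2 * (1/r) / (2 + 1/r) \<le> ln (1 + 1/r)" by (rule ln_lower) (use r0 in simp)
  moreover have "2 * (1/r) / (2 + 1/r) = 1 / (r + 1/2)" using r0 by (simp add: field_simps)
  ultimately have "1 \<le> (r + 1/2) * ln (1 + 1/r)" using r0 by (simp add: field_simps)
  then have "exp 1 \<le> exp ((r + 1/2) * ln (1 + 1/r))" by simp
  also have "\<dots> = (1 + 1/r) powr (r + 1/2)" using p by (simp add: powr_def)
  also have "\<dots> = (1 + 1/r) ^ k * sqrt (1 + 1/r)"
  proof -
    have "(1 + 1/r) powr (r + 1/2) = (1 + 1/r) powr (real k) * (1 + 1/r) powr (1/2)"
      by (simp add: powr_add assms(2))
    also have "\<dots> = (1 + 1/r) ^ k * sqrt (1 + 1/r)"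
      using p by (simp add: powr_realpow powr_half_sqrt)
    finally show ?thesis .
  qed
  finally have *: "exp 1 \<le> (1 + 1/r) ^ k * sqrt (1 + 1/r)" .
  have "exp 1 * (sqrt r * r ^ k) \<le> (1 + 1/r) ^ k * sqrt (1 + 1/r) * (sqrt r * r ^ k)"
    by (rule mult_right_mono[OF *]) (use r0 in simp)
  also have "\<dots> = ((1 + 1/r) * r) ^ k * sqrt ((1 + 1/r) * r)"
    using r0 by (simp add: power_mult_distrib real_sqrt_mult)
  also have "(1 + 1/r) * r = r + 1" using r0 by (simp add: field_simps)
  finally show ?thesis by (simp add: ac_simps)
qed

lemma fact_upper1: "k \<ge> 1 \<Longrightarrow> fact k * exp (real k) \<le> exp 1 * sqrt (real k) * real k ^ k"
proof (induction k rule: nat_induct_at_least)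
  case base then show ?case by simp
next
  case (Suc k)
  have "fact (Suc k) * exp (real (Suc k)) = (real k + 1) * exp 1 * (fact k * exp (real k))"
    by (simp add: exp_add algebra_simps)
  also have "\<dots> \<le> (real k + 1) * exp 1 * (exp 1 * sqrt (real k) * real k ^ k)"
    by (rule mult_left_mono[OF Suc.IH]) simp
  also have "\<dots> \<le> (real k + 1) * exp 1 * (sqrt (real k + 1) * (real k + 1) ^ k)"
    by (rule mult_left_mono[OF e_le_ratio]) (use Suc.hyps in auto)
  also have "\<dots> = exp 1 * sqrt (real (Suc k)) * real (Suc k) ^ Suc k"
    by (simp add: algebra_simps)
  finally show ?case .
qed

lemma fact_upper: "fact k \<le> exp 1 * sqrt (real k + 1) * real k ^ k / exp (real k)"
proof (cases "k = 0")
  case True then show ?thesis by simp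
next
  case False
  then have "fact k * exp (real k) \<le> exp 1 * sqrt (real k) * real k ^ k" by (intro fact_upper1) simp
  also have "\<dots> \<le> exp 1 * sqrt (real k + 1) * real k ^ k" by (intro mult_right_mono mult_left_mono) auto
  finally show ?thesis by (simp add: le_divide_eq)
qed

lemma core:
  fixes N c z w :: real
  assumes N: "N > 0"
    and t1: "1-2*c-2*z \<ge> 0" and t2: "1-2*c+4*z \<ge> 0" and t3: "6*c-3/2-9*z \<ge> 0"
    and t4: "6*c-3/2+3*z \<ge> 0" and t5: "2*c+z-1/2 \<ge> 0" and t6: "1/2-c-z \<ge> 0"
    and t7: "1/2-c+2*z \<ge> 0" and t8: "2*c-3*z-1/2 \<ge> 0" and t9: "w \<ge> 0"
    and t10: "1-2*c-2*z-w \<ge> 0" and t11: "1-2*c+4*z-w \<ge> 0" and t12: "-7/2+10*c-5*z+w \<ge> 0"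
  shows "xlx N * xlx (N*(1-2*c-2*z)) * xlx (N*(1-2*c+4*z)) * xlx (N*(6*c-3/2-9*z))
          * xlx (N*(6*c-3/2+3*z)) * xlx (N*(3/2))
        / (xlx (N*(2*c+z-1/2)) * xlx (N*(1/2-c-z)) * xlx (N*(1/2-c+2*z)) * xlx (N*(2*c-3*z-1/2))
          * xlx (N*w) * xlx (N*(1-2*c-2*z-w)) * xlx (N*(1-2*c+4*z-w)) * xlx (N*(-7/2+10*c-5*z+w))
          * xlx (N*3))
        * (3 powr (N*(2-4*c+2*z)) * 2 powr (N*(2*w)) * (1/1.618) powr (N*w) * 2 powr (N*(3/2))
          / 2 powr (N*(1-2*c+z)))
      = h_fun (c,z,w) powr N"
proof -
  note sc = Lx_scale[OF N]
  have s1: "Lx (N*(1-2*c-2*z)) = N*(1-2*c-2*z)*ln N + N*Lx (1-2*c-2*z)" using sc t1 by blast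
  have s2: "Lx (N*(1-2*c+4*z)) = N*(1-2*c+4*z)*ln N + N*Lx (1-2*c+4*z)" using sc t2 by blast
  have s3: "Lx (N*(6*c-3/2-9*z)) = N*(6*c-3/2-9*z)*ln N + N*Lx (6*c-3/2-9*z)" using sc t3 by blast
  have s4: "Lx (N*(6*c-3/2+3*z)) = N*(6*c-3/2+3*z)*ln N + N*Lx (6*c-3/2+3*z)" using sc t4 by blast
  have s5: "Lx (N*(2*c+z-1/2)) = N*(2*c+z-1/2)*ln N + N*Lx (2*c+z-1/2)" using sc t5 by blast
  have s6: "Lx (N*(1/2-c-z)) = N*(1/2-c-z)*ln N + N*Lx (1/2-c-z)" using sc t6 by blast
  have s7: "Lx (N*(1/2-c+2*z)) = N*(1/2-c+2*z)*ln N + N*Lx (1/2-c+2*z)" using sc t7 by blast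
  have s8: "Lx (N*(2*c-3*z-1/2)) = N*(2*c-3*z-1/2)*ln N + N*Lx (2*c-3*z-1/2)" using sc t8 by blast
  have s9: "Lx (N*w) = N*w*ln N + N*Lx w" using sc t9 by blast
  have s10: "Lx (N*(1-2*c-2*z-w)) = N*(1-2*c-2*z-w)*ln N + N*Lx (1-2*c-2*z-w)" using sc t10 by blast
  have s11: "Lx (N*(1-2*c+4*z-w)) = N*(1-2*c+4*z-w)*ln N + N*Lx (1-2*c+4*z-w)" using sc t11 by blast
  have s12: "Lx (N*(10*c-7/2-5*z+w)) = N*(10*c-7/2-5*z+w)*ln N + N*Lx (10*c-7/2-5*z+w)" using sc[of "10*c-7/2-5*z+w"] t12 by simp
  have s13: "Lx (N*3/2) = N*(3/2)*ln N + N*(3/2 * (ln 3 - ln 2))"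
    using sc[of "3/2"] by (simp add: Lx_pos ln_div)
  have s14: "Lx (N*3) = N*3*ln N + N*(3 * ln 3)"
    using sc[of 3] by (simp add: Lx_pos)
  have s0: "Lx N = N * ln N" using N by (simp add: Lx_pos)
  have L: "?thesis \<longleftrightarrow> True"
    unfolding h_fun_def f_fun_def g_fun_def
    apply (simp add: xlx_exp powr_def exp_add[symmetric] exp_diff[symmetric] del: exp_add exp_diff)
    unfolding s0 s1 s2 s3 s4 s5 s6 s7 s8 s9 s10 s11 s12 s13 s14
    by (simp add: algebra_simps)
  show ?thesis using L by simp
qed

lemma prod_fact_upper:
  "prod_list (map (\<lambda>k. fact k) ps) * exp (real (sum_list ps))
     \<le> exp 1 ^ length ps * prod_list (map (\<lambda>k. sqrt (real k + 1) * real k ^ k) ps)"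
proof (induction ps)
  case Nil then show ?case by simp
next
  case (Cons p ps)
  have a: "fact p * exp (real p) \<le> exp 1 * (sqrt (real p + 1) * real p ^ p)"
    using fact_upper[of p] by (simp add: divide_le_eq le_divide_eq field_simps)
  have "prod_list (map (\<lambda>k. fact k) (p#ps)) * exp (real (sum_list (p#ps)))
      = (fact p * exp (real p)) * (prod_list (map (\<lambda>k. fact k) ps) * exp (real (sum_list ps)))"
    by (simp add: exp_add algebra_simps)
  also have "\<dots> \<le> (exp 1 * (sqrt (real p + 1) * real p ^ p)) *
        (exp 1 ^ length ps * prod_list (map (\<lambda>k. sqrt (real k + 1) * real k ^ k) ps))"
    by (rule mult_mono[OF a Cons.IH]) (auto intro!: mult_nonneg_nonneg prod_list_nonneg)
  also have "\<dots> = exp 1 ^ length (p#ps) * prod_list (map (\<lambda>k. sqrt (real k + 1) * real k ^ k) (p#ps))"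
    by (simp add: algebra_simps)
  finally show ?case .
qed

lemma prod_fact_lower:
  "prod_list (map (\<lambda>k. real k ^ k) qs) \<le> prod_list (map (\<lambda>k. fact k) qs) * exp (real (sum_list qs))"
proof (induction qs)
  case Nil then show ?case by simp
next
  case (Cons p ps)
  have a: "real p ^ p \<le> fact p * exp (real p)"
    using fact_lower[of p] by (simp add: divide_le_eq)
  have "prod_list (map (\<lambda>k. real k ^ k) (p#ps)) = real p ^ p * prod_list (map (\<lambda>k. real k ^ k) ps)" by simp
  also have "\<dots> \<le> (fact p * exp (real p)) * (prod_list (map (\<lambda>k. fact k) ps) * exp (real (sum_list ps)))"
    by (rule mult_mono[OF a Cons.IH]) (auto intro!: mult_nonneg_nonneg prod_list_nonneg)
  also have "\<dots> = prod_list (map (\<lambda>k. fact k) (p#ps)) * exp (real (sum_list (p#ps)))"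
    by (simp add: exp_add algebra_simps)
  finally show ?case .
qed

lemma ratio_bound:
  assumes "sum_list ps = sum_list qs"
  shows "prod_list (map (\<lambda>k. fact k) ps) / prod_list (map (\<lambda>k. fact k) qs)
     \<le> exp 1 ^ length ps * prod_list (map (\<lambda>k. sqrt (real k + 1)) ps)
        * (prod_list (map (\<lambda>k. real k ^ k) ps) / prod_list (map (\<lambda>k. real k ^ k) qs))"
proof -
  let ?E = "exp (real (sum_list qs))"
  have E: "?E > 0" by simp
  have pq: "prod_list (map (\<lambda>k. real k ^ k) qs) > 0"
    by (induction qs) (auto intro!: mult_pos_pos)
  have u: "prod_list (map (\<lambda>k. fact k) ps) \<le> exp 1 ^ length ps * prod_list (map (\<lambda>k. sqrt (real k + 1) * real k ^ k) ps) / ?E"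
    using prod_fact_upper[of ps] assms E by (simp add: le_divide_eq)
  have l: "prod_list (map (\<lambda>k. real k ^ k) qs) / ?E \<le> prod_list (map (\<lambda>k. fact k) qs)"
    using prod_fact_lower[of qs] E by (simp add: divide_le_eq)
  have "prod_list (map (\<lambda>k. fact k) ps) / prod_list (map (\<lambda>k. fact k) qs)
      \<le> (exp 1 ^ length ps * prod_list (map (\<lambda>k. sqrt (real k + 1) * real k ^ k) ps) / ?E)
        / (prod_list (map (\<lambda>k. real k ^ k) qs) / ?E)"
  proof (rule frac_le[OF _ u _ l])
    have "0 \<le> prod_list (map (\<lambda>k. sqrt (real k + 1) * real k ^ k) ps)" by (rule prod_list_nonneg) auto
    then show "0 \<le> exp 1 ^ length ps * prod_list (map (\<lambda>k. sqrt (real k + 1) * real k ^ k) ps) / ?E"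
      using E by simp
    show "0 < prod_list (map (\<lambda>k. real k ^ k) qs) / ?E" using pq E by simp
  qed
  also have "\<dots> = exp 1 ^ length ps * prod_list (map (\<lambda>k. sqrt (real k + 1) * real k ^ k) ps)
        / prod_list (map (\<lambda>k. real k ^ k) qs)" using E by simp
  also have "prod_list (map (\<lambda>k. sqrt (real k + 1) * real k ^ k) ps)
      = prod_list (map (\<lambda>k. sqrt (real k + 1)) ps) * prod_list (map (\<lambda>k. real k ^ k) ps)"
    by (induction ps) auto
  finally show ?thesis by simp
qed

lemma prod_list_le_pow:
  assumes "\<And>k. k \<in> set ps \<Longrightarrow> 0 \<le> f k \<and> f k \<le> (B::real)"
  shows "prod_list (map f ps) \<le> B ^ length ps"
  using assms
proof (induction ps)
  case Nil then show ?case by simp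
next
  case (Cons p ps)
  have p: "0 \<le> f p" "f p \<le> B" using Cons.prems by auto
  have ih: "prod_list (map f ps) \<le> B ^ length ps" using Cons by auto
  have "0 \<le> prod_list (map f ps)" by (rule prod_list_nonneg) (use Cons.prems in auto)
  then show ?case using p ih by (auto intro!: mult_mono)
qed

lemma fact_dfact: "fact (2*k) = dfact (2*k - 1) * 2^k * fact k"
proof (induction k)
  case 0 then show ?case by simp
next
  case (Suc k)
  show ?case
  proof (cases k)
    case 0 then show ?thesis by simp
  next
    case (Suc l)
    then have d: "dfact (2 * Suc k - 1) = (2*k+1) * dfact (2*k - 1)"
      by (simp add: numeral_2_eq_2)
    have "fact (2 * Suc k) = (2*k+2) * (2*k+1) * (fact (2*k) :: nat)"
      by (simp add: numeral_2_eq_2 algebra_simps)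
    also have "\<dots> = dfact (2 * Suc k - 1) * 2 ^ Suc k * fact (Suc k)"
      unfolding Suc.IH d by (simp add: algebra_simps)
    finally show ?thesis .
  qed
qed

lemma dfact_real: "real (dfact (2*k - 1)) = fact (2*k) / (2^k * fact k)"
proof -
  have "(fact (2*k) :: real) = real (fact (2*k) :: nat)" by simp
  also have "\<dots> = real (dfact (2*k - 1)) * 2^k * fact k"
    unfolding fact_dfact by simp
  finally show ?thesis by (simp add: field_simps)
qed

lemma h_pos: "h_fun p > 0"
  by (cases p) (simp add: h_fun_def f_fun_def g_fun_def xlx_pos)

lemma term_bound:
  fixes n x i j m :: nat
  assumes n: "n = 2*m" "m > 0" and H1: "454*n < 1000*x" and H2: "100000*x \<le> 45537*n"
    and Hi: "i \<le> m - x" and Hj: "j \<le> n - 2*i - 2*x"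
  shows "real (n choose (m - i)) * fact (m - i) * 3 ^ (n - 2*x - 2*i)
         / (fact (2*x + i - m) * 2 ^ (m - x - i) * fact (m - x - i))
       * (fact (m + i) * 3 ^ (n - 2*x + 4*i)
         / (fact (2*x - 3*i - m) * 2 ^ (m - x + 2*i) * fact (m - x + 2*i)))
       * (real ((n - 2*i - 2*x) choose j) * real ((n - 2*x + 4*i) choose j)
           * 2 ^ (2*j) * fact j * (1 / 1.618) ^ j
           * fact (3 * (2*x - m - 3*i)) * fact (3 * (2*x - m + i))
           / fact (3 * (2*x - m - 3*i) - 2 * (n - 2*i - 2*x) + j))
       / real (dfact (3 * n - 1))
     \<le> exp 1 ^ 6 * (7 * real n) ^ 3 * h_fun (real x / real n, real i / real n, real j / real n) ^ n"
    (is "?lhs \<le> ?rhs")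
proof -
  have xm: "x + i \<le> m" "x \<le> m" using Hi H2 n by auto
  have f1: "m \<le> 2*x + i" "3*i + m \<le> 2*x" "m \<le> 2*x" "3*i \<le> 2*x - m" "2*i + 2*x \<le> n"
    using xm H1 n by auto
  have f2: "2*(n - 2*i - 2*x) \<le> 3*(2*x - m - 3*i)" using xm H1 n by auto
  have f3: "j \<le> n - 2*x + 4*i" "m - i \<le> n" "n - (m - i) = m + i" using Hj n xm by auto
  define a where "a = n - 2*i - 2*x"
  define b where "b = n - 2*x + 4*i"
  define A where "A = 3 * (2*x - m - 3*i)"
  define B where "B = 3 * (2*x - m + i)"
  define e where "e = 3 * (2*x - m - 3*i) - 2 * (n - 2*i - 2*x) + j"
  define d1 where "d1 = 2*x + i - m"
  define d2 where "d2 = m - x - i"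
  define d3 where "d3 = m - x + 2*i"
  define d4 where "d4 = 2*x - 3*i - m"
  define ps where "ps = [n, a, b, A, B, 3*m]"
  define qs where "qs = [d1, d2, d3, d4, j, a - j, b - j, e, 6*m]"
  define PW where "PW = (3::real) ^ (n - 2*x - 2*i) * 3 ^ (n - 2*x + 4*i) * 2 ^ (2*j) * (1 / 1.618) ^ j
        * 2 ^ (3*m) / (2 ^ (m - x - i) * 2 ^ (m - x + 2*i))"
  have ja: "j \<le> a" using Hj a_def by simp
  have jb: "j \<le> b" using f3 b_def by simp
  have dm: "3 * n - 1 = 2 * (3*m) - 1" "2 * (3*m) = 6*m" using n by auto
  have LHS: "?lhs = prod_list (map (\<lambda>k. fact k) ps) / prod_list (map (\<lambda>k. fact k) qs) * PW"
    unfolding dm(1) dfact_real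
    using f3 ja jb
    by (simp add: ps_def qs_def PW_def binomial_fact field_simps a_def b_def A_def B_def e_def
        d1_def d2_def d3_def d4_def dm(2))
  have e1: "a + 2*i + 2*x = n" using f1 unfolding a_def by simp
  have e2: "b + 2*x = n + 4*i" using f1 n unfolding b_def by simp
  have e3: "A + 3*m + 9*i = 6*x" using f1 unfolding A_def by simp
  have e4: "B + 3*m = 6*x + 3*i" using f1 unfolding B_def by simp
  have e5: "e + 2*a = A + j" using f2 unfolding e_def a_def A_def by simp
  have e6: "d1 + m = 2*x + i" using f1 unfolding d1_def by simp
  have e7: "d2 + x + i = m" using xm unfolding d2_def by simp
  have e8: "d3 + x = m + 2*i" using xm unfolding d3_def by simp
  have e9: "d4 + 3*i + m = 2*x" using f1 unfolding d4_def by simp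
  have e10: "(a - j) + j = a" "(b - j) + j = b" using ja jb by simp_all
  have sumeq: "sum_list ps = sum_list qs"
    unfolding ps_def qs_def using e1 e2 e3 e4 e5 e6 e7 e8 e9 e10 n by simp
  have R: "prod_list (map (\<lambda>k. fact k) ps) / prod_list (map (\<lambda>k. fact k) qs)
     \<le> exp 1 ^ 6 * prod_list (map (\<lambda>k. sqrt (real k + 1)) ps)
        * (prod_list (map (\<lambda>k. real k ^ k) ps) / prod_list (map (\<lambda>k. real k ^ k) qs))"
  proof -
    have "length ps = 6" by (simp add: ps_def)
    then show ?thesis using ratio_bound[OF sumeq] by (simp only:)
  qed
  have S: "prod_list (map (\<lambda>k. sqrt (real k + 1)) ps) \<le> sqrt (7 * real n) ^ 6"
  proof -
    have "prod_list (map (\<lambda>k. sqrt (real k + 1)) ps) \<le> sqrt (7 * real n) ^ length ps"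
    proof (rule prod_list_le_pow)
      fix k assume "k \<in> set ps"
      then have "k \<le> 6 * n" using xm f1 n by (auto simp: ps_def a_def b_def A_def B_def)
      then have "real k + 1 \<le> 7 * real n" using n by linarith
      then show "0 \<le> sqrt (real k + 1) \<and> sqrt (real k + 1) \<le> sqrt (7 * real n)" by simp
    qed
    moreover have "length ps = 6" by (simp add: ps_def)
    ultimately show ?thesis by (simp only:)
  qed
  have sq: "sqrt (7 * real n) ^ 6 = (7 * real n) ^ 3"
  proof -
    have "sqrt (7 * real n) ^ 6 = (sqrt (7 * real n) ^ 2) ^ 3" by (subst power_mult[symmetric]) simp
    then show ?thesis by simp
  qed
  have K: "prod_list (map (\<lambda>k. real k ^ k) ps) / prod_list (map (\<lambda>k. real k ^ k) qs) * PW
      = h_fun (real x / real n, real i / real n, real j / real n) ^ n"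
  proof -
    define N where "N = real n"
    define c where "c = real x / N"
    define z where "z = real i / N"
    define w where "w = real j / N"
    have N0: "N > 0" using n unfolding N_def by simp
    have r1: "real a + 2*real i + 2*real x = real n" using arg_cong[OF e1, of real] by simp
    have r2: "real b + 2*real x = real n + 4*real i" using arg_cong[OF e2, of real] by simp
    have r3: "real A + 3*real m + 9*real i = 6*real x" using arg_cong[OF e3, of real] by simp
    have r4: "real B + 3*real m = 6*real x + 3*real i" using arg_cong[OF e4, of real] by simp
    have r5: "real e + 2*real a = real A + real j" using arg_cong[OF e5, of real] by simp
    have r6: "real d1 + real m = 2*real x + real i" using arg_cong[OF e6, of real] by simp
    have r7: "real d2 + real x + real i = real m" using arg_cong[OF e7, of real] by simp
    have r8: "real d3 + real x = real m + 2*real i" using arg_cong[OF e8, of real] by simp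
    have r9: "real d4 + 3*real i + real m = 2*real x" using arg_cong[OF e9, of real] by simp
    have r10: "real (a - j) + real j = real a" "real (b - j) + real j = real b"
      using arg_cong[OF e10(1), of real] arg_cong[OF e10(2), of real] by simp_all
    have rn: "real n = 2 * real m" using n by simp
    have rp1: "real ((n-2*x-2*i) + (n-2*x+4*i)) = real a + real b"
      unfolding a_def b_def using f1 by simp
    have rp4: "real ((m-x-i) + (m-x+2*i)) = real d2 + real d3"
      unfolding d2_def d3_def by simp
    have N1: "N \<noteq> 0" using N0 by simp
    have n1: "real n \<noteq> 0" "n \<noteq> 0" using n by simp_all
    note fs = c_def z_def w_def N_def field_simps N1 n1
    have Nc: "N*c = real x" and Nz: "N*z = real i" and Nw: "N*w = real j" and NN: "N = real n"
      using N1 by (simp_all add: c_def z_def w_def N_def)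
    have v1: "N*(1-2*c-2*z) = real a"
    proof -
      have "N*(1-2*c-2*z) = N - 2*(N*c) - 2*(N*z)" by (simp add: algebra_simps)
      then show ?thesis using r1 Nc Nz Nw NN by linarith
    qed
    have v2: "N*(1-2*c+4*z) = real b"
    proof -
      have "N*(1-2*c+4*z) = N - 2*(N*c) + 4*(N*z)" by (simp add: algebra_simps)
      then show ?thesis using r2 Nc Nz Nw NN by linarith
    qed
    have v3: "N*(6*c-3/2-9*z) = real A"
    proof -
      have "N*(6*c-3/2-9*z) = 6*(N*c) - 3/2*N - 9*(N*z)" by (simp add: algebra_simps)
      then show ?thesis using r3 rn Nc Nz Nw NN by linarith
    qed
    have v4: "N*(6*c-3/2+3*z) = real B"
    proof -
      have "N*(6*c-3/2+3*z) = 6*(N*c) - 3/2*N + 3*(N*z)" by (simp add: algebra_simps)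
      then show ?thesis using r4 rn Nc Nz Nw NN by linarith
    qed
    have v5: "N*(3/2) = real (3*m)"
    proof -
      have "N*(3/2) = 3/2*N" by (simp add: algebra_simps)
      then show ?thesis using rn Nc Nz Nw NN by linarith
    qed
    have v6: "N*(2*c+z-1/2) = real d1"
    proof -
      have "N*(2*c+z-1/2) = 2*(N*c) + N*z - 1/2*N" by (simp add: algebra_simps)
      then show ?thesis using r6 rn Nc Nz Nw NN by linarith
    qed
    have v7: "N*(1/2-c-z) = real d2"
    proof -
      have "N*(1/2-c-z) = 1/2*N - N*c - N*z" by (simp add: algebra_simps)
      then show ?thesis using r7 rn Nc Nz Nw NN by linarith
    qed
    have v8: "N*(1/2-c+2*z) = real d3"
    proof -
      have "N*(1/2-c+2*z) = 1/2*N - N*c + 2*(N*z)" by (simp add: algebra_simps)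
      then show ?thesis using r8 rn Nc Nz Nw NN by linarith
    qed
    have v9: "N*(2*c-3*z-1/2) = real d4"
    proof -
      have "N*(2*c-3*z-1/2) = 2*(N*c) - 3*(N*z) - 1/2*N" by (simp add: algebra_simps)
      then show ?thesis using r9 rn Nc Nz Nw NN by linarith
    qed
    have v10: "N*w = real j"
    proof -
      have "N*w = N*w" by (simp add: algebra_simps)
      then show ?thesis using  Nc Nz Nw NN by linarith
    qed
    have v11: "N*(1-2*c-2*z-w) = real (a-j)"
    proof -
      have "N*(1-2*c-2*z-w) = N - 2*(N*c) - 2*(N*z) - N*w" by (simp add: algebra_simps)
      then show ?thesis using r1 r10 Nc Nz Nw NN by linarith
    qed
    have v12: "N*(1-2*c+4*z-w) = real (b-j)"
    proof -
      have "N*(1-2*c+4*z-w) = N - 2*(N*c) + 4*(N*z) - N*w" by (simp add: algebra_simps)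
      then show ?thesis using r2 r10 Nc Nz Nw NN by linarith
    qed
    have v13: "N*(-7/2+10*c-5*z+w) = real e"
    proof -
      have "N*(-7/2+10*c-5*z+w) = -7/2*N + 10*(N*c) - 5*(N*z) + N*w" by (simp add: algebra_simps)
      then show ?thesis using r5 r1 r3 rn Nc Nz Nw NN by linarith
    qed
    have v14: "N*3 = real (6*m)"
    proof -
      have "N*3 = 3*N" by (simp add: algebra_simps)
      then show ?thesis using rn Nc Nz Nw NN by linarith
    qed
    have p1: "N*(2-4*c+2*z) = real ((n-2*x-2*i) + (n-2*x+4*i))"
    proof -
      have "N*(2-4*c+2*z) = 2*N - 4*(N*c) + 2*(N*z)" by (simp add: algebra_simps)
      then show ?thesis using rp1 r1 r2 Nc Nz Nw NN by linarith
    qed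
    have p2: "N*(2*w) = real (2*j)"
    proof -
      have "N*(2*w) = 2*(N*w)" by (simp add: algebra_simps)
      then show ?thesis using  Nc Nz Nw NN by linarith
    qed
    have p4: "N*(1-2*c+z) = real ((m-x-i) + (m-x+2*i))"
    proof -
      have "N*(1-2*c+z) = N - 2*(N*c) + N*z" by (simp add: algebra_simps)
      then show ?thesis using rp4 r7 r8 rn Nc Nz Nw NN by linarith
    qed
    have nn: "\<And>t k. N * t = real k \<Longrightarrow> t \<ge> 0"
    proof -
      fix t k assume "N * t = real k"
      then have "0 \<le> N * t" by simp
      then show "t \<ge> 0" using N0 by (simp add: zero_le_mult_iff)
    qed
    have P3: "\<And>k. (3::real) powr real k = 3 ^ k" by (rule powr_realpow) simp
    have P2: "\<And>k. (2::real) powr real k = 2 ^ k" by (rule powr_realpow) simp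
    have P1: "\<And>k. (1/1.618::real) powr real k = (1/1.618) ^ k" by (rule powr_realpow) simp
    have Ph: "h_fun (c, z, w) powr real n = h_fun (c, z, w) ^ n" by (rule powr_realpow[OF h_pos])
    note C = core[OF N0 nn[OF v1] nn[OF v2] nn[OF v3] nn[OF v4] nn[OF v6] nn[OF v7] nn[OF v8] nn[OF v9]
      nn[OF v10] nn[OF v11] nn[OF v12] nn[OF v13]]
    have C2: "real n ^ n * real a ^ a * real b ^ b * real A ^ A * real B ^ B * real (3*m) ^ (3*m)
        / (real d1 ^ d1 * real d2 ^ d2 * real d3 ^ d3 * real d4 ^ d4 * real j ^ j * real (a-j) ^ (a-j)
           * real (b-j) ^ (b-j) * real e ^ e * real (6*m) ^ (6*m))
        * (3 ^ ((n-2*x-2*i) + (n-2*x+4*i)) * 2 ^ (2*j) * (1/1.618) ^ j * 2 ^ (3*m) / 2 ^ ((m-x-i) + (m-x+2*i)))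
        = h_fun (c, z, w) ^ n"
      using C unfolding v1 v2 v3 v4 v5 v6 v7 v8 v9 v10 v11 v12 v13 v14 p1 p2 p4
      unfolding N_def xlx_nat P3 P2 P1 Ph .
    show ?thesis
      using C2 unfolding ps_def qs_def PW_def c_def z_def w_def N_def
      by (simp add: power_add)
  qed
  have PW0: "0 \<le> PW" unfolding PW_def by simp
  have "?lhs = prod_list (map (\<lambda>k. fact k) ps) / prod_list (map (\<lambda>k. fact k) qs) * PW" by (rule LHS)
  also have "\<dots> \<le> (exp 1 ^ 6 * prod_list (map (\<lambda>k. sqrt (real k + 1)) ps)
        * (prod_list (map (\<lambda>k. real k ^ k) ps) / prod_list (map (\<lambda>k. real k ^ k) qs))) * PW"
    by (rule mult_right_mono[OF R]) (rule PW0)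
  also have "\<dots> = exp 1 ^ 6 * prod_list (map (\<lambda>k. sqrt (real k + 1)) ps)
        * h_fun (real x / real n, real i / real n, real j / real n) ^ n"
    by (simp only: mult.assoc K)
  also have "\<dots> \<le> exp 1 ^ 6 * (7 * real n) ^ 3 * h_fun (real x / real n, real i / real n, real j / real n) ^ n"
  proof (rule mult_right_mono[OF mult_left_mono])
    show "prod_list (map (\<lambda>k. sqrt (real k + 1)) ps) \<le> (7 * real n) ^ 3" using S sq by simp
    show "0 \<le> (exp 1::real) ^ 6" by simp
    show "0 \<le> h_fun (real x / real n, real i / real n, real j / real n) ^ n" using h_pos[of "(real x / real n, real i / real n, real j / real n)"] by simp
  qed
  finally show ?thesis .
qed

lemma Lx_lower: "t \<ge> 0 \<Longrightarrow> Lx t \<ge> -1"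
proof (cases "t = 0")
  case False
  assume t: "t \<ge> 0"
  then have tp: "t > 0" using False by simp
  have "ln (1/t) \<le> 1/t - 1" by (rule ln_le_minus_one) (use tp in simp)
  then have "- ln t \<le> 1/t - 1" using tp by (simp add: ln_div)
  then have "t * (- ln t) \<le> t * (1/t - 1)" using tp by (intro mult_left_mono) auto
  then have "t * ln t \<ge> t - 1" using tp by (simp add: algebra_simps)
  then show ?thesis using tp by (simp add: Lx_pos)
qed simp

lemma Lx_upper: "t \<ge> 0 \<Longrightarrow> t \<le> 3 \<Longrightarrow> Lx t \<le> 3 * ln 3"
proof (cases "t \<le> 1")
  case True
  assume t: "t \<ge> 0"
  show ?thesis
  proof (cases "t = 0")
    case False
    then have tp: "t > 0" using t by simp
    have "ln t \<le> 0" using True tp by simp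
    then have "t * ln t \<le> 0" using tp by (simp add: mult_nonneg_nonpos)
    moreover have "0 \<le> 3 * ln (3::real)" by simp
    ultimately show ?thesis using Lx_pos[OF tp] by linarith
  qed simp
next
  case False
  assume t: "t \<ge> 0" "t \<le> 3"
  then have tp: "t > 0" using False by simp
  have "t * ln t \<le> 3 * ln 3" using t False by (intro mult_mono) auto
  then show ?thesis using tp by (simp add: Lx_pos)
qed

lemma h_exp: "h_fun (c, z, w) = exp ((1/2 - 4*c + 2*z) * ln 3 + Lx (1 - 2*c - 2*z) + Lx (1 - 2*c + 4*z)
    + Lx (6*c - 3/2 + 3*z) + Lx (6*c - 3/2 - 9*z)
    - (Lx (2*c + z - 1/2) + (1 - 2*c + z) * ln 2 + Lx (1/2 - c - z) + Lx (1/2 - c + 2*z) + Lx (2*c - 3*z - 1/2))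
    + (2*w*ln 2 + w * ln (500/809)
       - (Lx w + Lx (1 - 2*c - 2*z - w) + Lx (1 - 2*c + 4*z - w) + Lx (10*c - 7/2 - 5*z + w))))"
  unfolding h_fun_def f_fun_def g_fun_def
  by (simp add: xlx_exp powr_def exp_add[symmetric] exp_diff[symmetric] del: exp_add exp_diff)

lemma h_bound:
  assumes "p \<in> Omega"
  shows "h_fun p \<le> exp (3/2 * ln 3 + 2 * ln 2 + 12 * ln 3 + 8)"
proof -
  obtain c z w where p: "p = (c, z, w)" by (cases p)
  have o: "0.454 < c" "c \<le> 0.45537" "0 \<le> z" "z \<le> 1/2 - c" "0 \<le> w" "w \<le> 1 - 2*c - 2*z"
    using assms p by (auto simp: Omega_def)
  have l3: "0 \<le> ln (3::real)" "0 \<le> ln (2::real)" "ln (500/809::real) \<le> 0" by auto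
  have a1: "(1/2 - 4*c + 2*z) * ln 3 \<le> 3/2 * ln 3" using o l3 by (intro mult_right_mono) auto
  have a2: "0 \<le> (1 - 2*c + z) * ln 2" using o l3 by (intro mult_nonneg_nonneg) auto
  have a3: "2*w*ln 2 \<le> 2 * ln 2" using o l3 by (intro mult_right_mono) auto
  have a4: "w * ln (500/809) \<le> 0" using o l3 by (intro mult_nonneg_nonpos) auto
  have b1: "Lx (1 - 2*c - 2*z) \<le> 3 * ln 3" using o by (intro Lx_upper) auto
  have b2: "Lx (1 - 2*c + 4*z) \<le> 3 * ln 3" using o by (intro Lx_upper) auto
  have b3: "Lx (6*c - 3/2 + 3*z) \<le> 3 * ln 3" using o by (intro Lx_upper) auto
  have b4: "Lx (6*c - 3/2 - 9*z) \<le> 3 * ln 3" using o by (intro Lx_upper) auto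
  have c1: "Lx (2*c + z - 1/2) \<ge> -1" using o by (intro Lx_lower) auto
  have c2: "Lx (1/2 - c - z) \<ge> -1" using o by (intro Lx_lower) auto
  have c3: "Lx (1/2 - c + 2*z) \<ge> -1" using o by (intro Lx_lower) auto
  have c4: "Lx (2*c - 3*z - 1/2) \<ge> -1" using o by (intro Lx_lower) auto
  have c5: "Lx w \<ge> -1" using o by (intro Lx_lower) auto
  have c6: "Lx (1 - 2*c - 2*z - w) \<ge> -1" using o by (intro Lx_lower) auto
  have c7: "Lx (1 - 2*c + 4*z - w) \<ge> -1" using o by (intro Lx_lower) auto
  have c8: "Lx (10*c - 7/2 - 5*z + w) \<ge> -1" using o by (intro Lx_lower) auto
  show ?thesis unfolding p h_exp exp_le_cancel_iff
    using a1 a2 a3 a4 b1 b2 b3 b4 c1 c2 c3 c4 c5 c6 c7 c8 by linarith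
qed

theorem lemma11:
  shows "\<exists>C N. \<forall>n x. n \<ge> N \<and> n > 0 \<and> even n \<and> 0.454 * real n < real x \<and> real x \<le> 0.45537 * real n
     \<longrightarrow> \<bar>q x n / real (dfact (3 * n - 1))\<bar>
           \<le> C * real n ^ 6 * (SUP p\<in>Omega. h_fun p ^ n)"
proof (intro exI allI impI)
  fix n x :: nat
  assume hyp: "1 \<le> n \<and> n > 0 \<and> even n \<and> 0.454 * real n < real x \<and> real x \<le> 0.45537 * real n"
  define m where "m = n div 2"
  have n: "n = 2*m" "m > 0" using hyp unfolding m_def by auto
  have H1: "454*n < 1000*x"
  proof -
    have "real (454*n) < real (1000*x)" using hyp by simp
    then show ?thesis by linarith
  qed
  have H2: "100000*x \<le> 45537*n"
  proof -
    have "real (100000*x) \<le> real (45537*n)" using hyp by simp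
    then show ?thesis by linarith
  qed
  have xm: "x \<le> m" using H2 n by simp
  define S where "S = (SUP p\<in>Omega. h_fun p ^ n)"
  define B :: real where "B = exp (3/2 * ln 3 + 2 * ln 2 + 12 * ln 3 + 8)"
  have bdd: "bdd_above ((\<lambda>p. h_fun p ^ n) ` Omega)"
  proof (rule bdd_aboveI2)
    fix p assume "p \<in> Omega"
    then show "h_fun p ^ n \<le> B ^ n" unfolding B_def
      using h_bound[of p] h_pos[of p] by (intro power_mono) auto
  qed
  have rn: "real n > 0" using n by simp
  have inO: "(real x / real n, real i / real n, real j / real n) \<in> Omega"
    if "i \<le> m - x" "j \<le> n - 2*i - 2*x" for i j
  proof -
    have a: "i + x \<le> m" "2*i + 2*x + j \<le> n" using that xm n by auto
    have b: "real i + real x \<le> real m" "2*real i + 2*real x + real j \<le> real n"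
      using a by (simp_all add: of_nat_add[symmetric] del: of_nat_add)
    have c: "real n = 2 * real m" using n by simp
    show ?thesis unfolding Omega_def using hyp rn b c
      by (simp add: field_simps)
  qed
  have SB: "h_fun (real x / real n, real i / real n, real j / real n) ^ n \<le> S"
    if "i \<le> m - x" "j \<le> n - 2*i - 2*x" for i j
    unfolding S_def by (rule cSUP_upper[OF inO[OF that] bdd])
  have S0: "0 \<le> S"
  proof -
    have "0 \<le> h_fun (real x / real n, real 0 / real n, real 0 / real n) ^ n"
      using h_pos[of "(real x / real n, real 0 / real n, real 0 / real n)"] by simp
    then show ?thesis using SB[of 0 0] by linarith
  qed
  define T where "T i j = real (n choose (m - i)) * fact (m - i) * 3 ^ (n - 2*x - 2*i)
         / (fact (2*x + i - m) * 2 ^ (m - x - i) * fact (m - x - i))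
       * (fact (m + i) * 3 ^ (n - 2*x + 4*i)
         / (fact (2*x - 3*i - m) * 2 ^ (m - x + 2*i) * fact (m - x + 2*i)))
       * (real ((n - 2*i - 2*x) choose j) * real ((n - 2*x + 4*i) choose j)
           * 2 ^ (2*j) * fact j * (1 / 1.618) ^ j
           * fact (3 * (2*x - m - 3*i)) * fact (3 * (2*x - m + i))
           / fact (3 * (2*x - m - 3*i) - 2 * (n - 2*i - 2*x) + j))
       / real (dfact (3 * n - 1))" for i j
  have qeq: "q x n / real (dfact (3 * n - 1)) = (\<Sum>i = 0..m - x. \<Sum>j = 0..n - 2*i - 2*x. T i j)"
    unfolding q_def Let_def m_def[symmetric] T_def
    by (simp add: sum_distrib_left sum_divide_distrib)
  have T0: "0 \<le> T i j" for i j
    unfolding T_def by (intro mult_nonneg_nonneg divide_nonneg_nonneg) auto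
  have TB: "T i j \<le> exp 1 ^ 6 * (7 * real n) ^ 3 * S" if "i \<le> m - x" "j \<le> n - 2*i - 2*x" for i j
  proof -
    have "T i j \<le> exp 1 ^ 6 * (7 * real n) ^ 3 * h_fun (real x / real n, real i / real n, real j / real n) ^ n"
      unfolding T_def by (rule term_bound[OF n H1 H2 that])
    also have "\<dots> \<le> exp 1 ^ 6 * (7 * real n) ^ 3 * S"
      by (rule mult_left_mono[OF SB[OF that]]) simp
    finally show ?thesis .
  qed
  define D where "D = exp 1 ^ 6 * (7 * real n) ^ 3 * S"
  have D0: "0 \<le> D" unfolding D_def using S0 by simp
  have "(\<Sum>i = 0..m - x. \<Sum>j = 0..n - 2*i - 2*x. T i j) \<le> (\<Sum>i = 0..m - x. real (n+1) * D)"
  proof (rule sum_mono)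
    fix i assume i: "i \<in> {0..m - x}"
    have "(\<Sum>j = 0..n - 2*i - 2*x. T i j) \<le> real (card {0..n - 2*i - 2*x}) * D"
      by (rule sum_bounded_above) (use i TB in \<open>auto simp: D_def\<close>)
    also have "\<dots> \<le> real (n+1) * D" using D0 by (intro mult_right_mono) auto
    finally show "(\<Sum>j = 0..n - 2*i - 2*x. T i j) \<le> real (n+1) * D" .
  qed
  also have "\<dots> = real (m - x + 1) * (real (n+1) * D)" by simp
  also have "\<dots> \<le> real (n+1) * (real (n+1) * D)"
    using D0 n by (intro mult_right_mono) auto
  also have "\<dots> \<le> (2 * real n) * ((2 * real n) * D)"
    using D0 rn by (intro mult_mono) auto
  also have "\<dots> = 4 * exp 1 ^ 6 * 343 * real n ^ 5 * S" unfolding D_def by (simp add: power_mult_distrib algebra_simps numeral_eq_Suc)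
  also have "\<dots> \<le> 4 * exp 1 ^ 6 * 343 * real n ^ 6 * S"
  proof -
    have "real n ^ 5 \<le> real n ^ 6" using hyp by (intro power_increasing) auto
    then show ?thesis using S0 by (intro mult_right_mono mult_left_mono) auto
  qed
  finally have main: "q x n / real (dfact (3 * n - 1)) \<le> 4 * exp 1 ^ 6 * 343 * real n ^ 6 * S"
    unfolding qeq .
  have "0 \<le> q x n / real (dfact (3 * n - 1))" unfolding qeq using T0 by (intro sum_nonneg) auto
  then show "\<bar>q x n / real (dfact (3 * n - 1))\<bar> \<le> 4 * exp 1 ^ 6 * 343 * real n ^ 6 * (SUP p\<in>Omega. h_fun p ^ n)"
    using main unfolding S_def by simp
qed

end
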